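(* Let $T$ be a measure-preserving transformation of a finite measure space $(X,\mu)$ and let $\{K_n\}_{n\ge1}$ be measurable subsets of $X$ with $\sum_{n=1}^\infty\mu(X\setminus K_n)<\infty$. Then there is a full measure subset $\Omega\subseteq X$ such that for any $x,y\in\Omega$ there exist $n\in\mathbb N$ and a sequence $n_k\to\infty$ with $T^{n_k}(x)\in K_n$ and $T^{n_k}(y)\in K_n$ for every $k$. *)

theory Defs
  imports "HOL-Analysis.Analysis"
begin

definition mpt :: "'a measure \<Rightarrow> ('a \<Rightarrow> 'a) \<Rightarrow> bool" where
  "mpt M T \<longleftrightarrow> T \<in> measurable M M \<and>
     (\<forall>A\<in>sets M. emeasure M (T -` A \<inter> space M) = emeasure M A)"

end

theory Submission
  imports Defs
begin

lemma funpow_meas: "T \<in> measurable M M \<Longrightarrow> (T ^^ k) \<in> measurable M M"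
  by (induction k) (auto intro: measurable_comp simp: measurable_ident)

lemma distr_eq: assumes "mpt M T" shows "distr M M T = M"
proof (rule measure_eqI)
  show "sets (distr M M T) = sets M" by simp
  fix A assume "A \<in> sets (distr M M T)"
  then show "emeasure (distr M M T) A = emeasure M A"
    using assms unfolding mpt_def by (simp add: emeasure_distr)
qed

lemma int_T: assumes "mpt M T" "g \<in> borel_measurable M"
  shows "(\<integral>x. g (T x) \<partial>M) = (integral\<^sup>L M g :: real)"
proof -
  have T: "T \<in> measurable M M" using assms unfolding mpt_def by auto
  have "integral\<^sup>L (distr M M T) g = (\<integral>x. g (T x) \<partial>M)"
    by (rule integral_distr[OF T assms(2)])
  then show ?thesis using distr_eq[OF assms(1)] by simp
qed

lemma maximal:
  assumes fm: "finite_measure M" and mp: "mpt M T" and B: "B \<in> sets M"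
  shows "emeasure M {x\<in>space M. \<exists>N. (\<Sum>k<N. 3 * indicator B ((T^^k) x) - (1::real)) > 0}
           \<le> 3 * emeasure M B"
proof -
  interpret finite_measure M by fact
  have T: "T \<in> measurable M M" using mp unfolding mpt_def by auto
  note T[measurable]
  define f where "f = (\<lambda>x. 3 * indicator B x - (1::real))"
  define S where "S = (\<lambda>N x. \<Sum>k<N. f ((T^^k) x))"
  define MX where "MX = (\<lambda>L x. Max ((\<lambda>N. S N x) ` {..L}))"
  have fm_meas[measurable]: "f \<in> borel_measurable M" unfolding f_def using B by measurable
  have Tk[measurable]: "(T^^k) \<in> measurable M M" for k by (rule funpow_meas[OF T])
  have S_meas[measurable]: "S N \<in> borel_measurable M" for N
    unfolding S_def by measurable
  have MX_meas[measurable]: "MX L \<in> borel_measurable M" for L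
    unfolding MX_def by measurable
  have Sbound: "\<bar>S N x\<bar> \<le> 2 * real N" for N x
  proof -
    have "\<bar>S N x\<bar> \<le> (\<Sum>k<N. \<bar>f ((T^^k) x)\<bar>)" unfolding S_def by (rule sum_abs)
    also have "\<dots> \<le> (\<Sum>k<N. 2)" by (rule sum_mono) (auto simp: f_def indicator_def)
    finally show ?thesis by simp
  qed
  have S0: "S 0 x = 0" for x unfolding S_def by simp
  have SSuc: "S (Suc N) x = f x + S N (T x)" for N x
    unfolding S_def by (subst sum.lessThan_Suc_shift) (simp add: funpow_Suc_right del: funpow.simps)
  have MX_ge: "N \<le> L \<Longrightarrow> S N x \<le> MX L x" for N L x
    unfolding MX_def by (rule Max_ge) auto
  have MX_in: "\<exists>N\<le>L. MX L x = S N x" for L x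
  proof -
    have "MX L x \<in> (\<lambda>N. S N x) ` {..L}" unfolding MX_def by (rule Max_in) auto
    then show ?thesis by auto
  qed
  have MX_nonneg: "0 \<le> MX L x" for L x using MX_ge[of 0 L x] S0 by simp
  have MX_bound: "\<bar>MX L x\<bar> \<le> 2 * real L" for L x
    using MX_in[of L x] Sbound by (metis of_nat_mono mult_left_mono order_trans zero_le_numeral)
  have MX_mono: "MX L x \<le> MX (Suc L) x" for L x
    using MX_in[of L x] MX_ge[of _ "Suc L" x] by force
  define P where "P = (\<lambda>L. {x\<in>space M. MX L x > 0})"
  have P_sets[measurable]: "P L \<in> sets M" for L unfolding P_def by measurable
  have key: "measure M (P L) \<le> 3 * measure M B" for L
  proof -
    have pw: "MX L x - MX L (T x) \<le> indicator (P L) x * f x" if x: "x \<in> space M" for x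
    proof (cases "MX L x > 0")
      case True
      then obtain N where N: "N \<le> L" "MX L x = S N x" using MX_in by blast
      with True S0 obtain N' where N': "N = Suc N'" by (cases N) auto
      have "S N x = f x + S N' (T x)" using N' SSuc by simp
      also have "\<dots> \<le> f x + MX L (T x)" using MX_ge[of N' L "T x"] N N' by simp
      finally show ?thesis using True x N by (simp add: P_def)
    next
      case False
      then have "MX L x = 0" using MX_nonneg[of L x] by simp
      then show ?thesis using MX_nonneg[of L "T x"] False by (simp add: P_def)
    qed
    have intMX: "integrable M (MX L)"
      by (rule integrable_const_bound[where B="2 * real L"]) (simp_all add: MX_bound)
    have intMXT: "integrable M (\<lambda>x. MX L (T x))"
      by (rule integrable_const_bound[where B="2 * real L"]) (simp_all add: MX_bound)
    have intg: "integrable M (\<lambda>x. indicator (P L) x * f x)"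
      by (rule integrable_const_bound[where B="2"], simp add: f_def indicator_def, measurable)
    have "0 = (\<integral>x. MX L x \<partial>M) - (\<integral>x. MX L (T x) \<partial>M)"
      using int_T[OF mp MX_meas[of L]] by simp
    also have "\<dots> = (\<integral>x. MX L x - MX L (T x) \<partial>M)"
      using intMX intMXT by simp
    also have "\<dots> \<le> (\<integral>x. indicator (P L) x * f x \<partial>M)"
      by (rule integral_mono) (use intMX intMXT intg pw in auto)
    also have "(\<lambda>x. indicator (P L) x * f x) = (\<lambda>x. 3 * indicator (P L \<inter> B) x - indicator (P L) x)"
      by (auto simp: f_def indicator_def fun_eq_iff)
    also have "(\<integral>x. 3 * indicator (P L \<inter> B) x - indicator (P L) x \<partial>M) = 3 * measure M (P L \<inter> B) - measure M (P L)"
      using B by (subst Bochner_Integration.integral_diff) (auto intro!: integrable_real_indicator simp: Int_absorb2 sets.sets_into_space less_top[symmetric])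
    finally have "measure M (P L) \<le> 3 * measure M (P L \<inter> B)" by simp
    also have "\<dots> \<le> 3 * measure M B" using B by (simp add: finite_measure_mono)
    finally show ?thesis .
  qed
  have inc: "incseq P"
    unfolding incseq_Suc_iff P_def using MX_mono by (auto intro: less_le_trans)
  have U: "{x\<in>space M. \<exists>N. (\<Sum>k<N. 3 * indicator B ((T^^k) x) - (1::real)) > 0} = (\<Union>L. P L)"
  proof (intro set_eqI iffI)
    fix x assume "x \<in> {x\<in>space M. \<exists>N. (\<Sum>k<N. 3 * indicator B ((T^^k) x) - (1::real)) > 0}"
    then obtain N where "x \<in> space M" "S N x > 0" by (auto simp: S_def f_def)
    moreover have "MX N x > 0" using MX_ge[of N N x] \<open>S N x > 0\<close> by linarith
    ultimately show "x \<in> (\<Union>L. P L)" by (auto simp: P_def)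
  next
    fix x assume "x \<in> (\<Union>L. P L)"
    then obtain L where "x \<in> space M" "MX L x > 0" by (auto simp: P_def)
    then show "x \<in> {x\<in>space M. \<exists>N. (\<Sum>k<N. 3 * indicator B ((T^^k) x) - (1::real)) > 0}"
      using MX_in[of L x] by (auto simp: S_def f_def)
  qed
  have "emeasure M (\<Union>L. P L) = (SUP L. emeasure M (P L))"
    by (rule SUP_emeasure_incseq[symmetric]) (use inc in auto)
  also have "\<dots> \<le> 3 * emeasure M B"
  proof (rule SUP_least)
    fix L
    have "emeasure M (P L) = ennreal (measure M (P L))" by (simp add: emeasure_eq_measure)
    also have "\<dots> \<le> ennreal (3 * measure M B)" using key[of L] by (rule ennreal_leI)
    also have "\<dots> = 3 * emeasure M B" by (simp add: emeasure_eq_measure ennreal_mult)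
    finally show "emeasure M (P L) \<le> 3 * emeasure M B" .
  qed
  finally show ?thesis using U by simp
qed


theorem mainTheorem10:
  fixes M :: "'a measure" and T :: "'a \<Rightarrow> 'a" and K :: "nat \<Rightarrow> 'a set"
  assumes "finite_measure M"
    and "mpt M T"
    and "\<And>n. n \<ge> 1 \<Longrightarrow> K n \<in> sets M"
    and "(\<Sum>n. emeasure M (space M - K (Suc n))) < \<infinity>"
  shows "\<exists>\<Omega>. \<Omega> \<in> sets M \<and> emeasure M (space M - \<Omega>) = 0 \<and>
           (\<forall>x\<in>\<Omega>. \<forall>y\<in>\<Omega>. \<exists>n::nat. n \<ge> 1 \<and>
              (\<exists>nk :: nat \<Rightarrow> nat. filterlim nk at_top sequentially \<and>
                 (\<forall>k. (T ^^ nk k) x \<in> K n \<and> (T ^^ nk k) y \<in> K n)))"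
proof -
  interpret finite_measure M by fact
  have T[measurable]: "T \<in> measurable M M" using assms(2) unfolding mpt_def by auto
  have Tk[measurable]: "(T^^k) \<in> measurable M M" for k by (rule funpow_meas[OF T])
  define B where "B = (\<lambda>n. space M - K n)"
  define E where "E = (\<lambda>n. {x\<in>space M. \<exists>N. (\<Sum>k<N. 3 * indicator (B n) ((T^^k) x) - (1::real)) > 0})"
  define A where "A = (\<lambda>n. E (Suc n))"
  have Bs[measurable]: "B (Suc n) \<in> sets M" for n
    unfolding B_def using assms(3)[of "Suc n"] by auto
  have As[measurable]: "A n \<in> sets M" for n
    unfolding A_def E_def by measurable
  have Ale: "measure M (A n) \<le> 3 * measure M (B (Suc n))" for n
  proof -
    have "ennreal (measure M (A n)) \<le> 3 * ennreal (measure M (B (Suc n)))"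
      using maximal[OF assms(1,2) Bs[of n]] unfolding A_def E_def
      by (simp add: emeasure_eq_measure)
    also have "\<dots> = ennreal (3 * measure M (B (Suc n)))" by (simp add: ennreal_mult)
    finally show ?thesis by (simp add: ennreal_le_iff)
  qed
  have sB: "summable (\<lambda>n. measure M (B (Suc n)))"
  proof (rule summable_suminf_not_top)
    show "(\<Sum>n. ennreal (measure M (B (Suc n)))) \<noteq> top"
      using assms(4) by (simp add: B_def emeasure_eq_measure[symmetric])
  qed simp
  have sA: "summable (\<lambda>n. measure M (A n))"
    by (rule summable_comparison_test[where g="\<lambda>n. 3 * measure M (B (Suc n))"])
       (use Ale sB in \<open>auto intro: summable_mult\<close>)
  have null: "limsup A \<in> null_sets M"
    by (rule borel_cantelli_limsup1) (use sA in \<open>auto simp: less_top[symmetric]\<close>)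
  define \<Omega> where "\<Omega> = space M - limsup A"
  have ls: "limsup A \<in> sets M" using null by auto
  have lssp: "limsup A \<subseteq> space M" using sets.sets_into_space[OF ls] .
  have "\<Omega> \<in> sets M" unfolding \<Omega>_def using ls by auto
  moreover have "emeasure M (space M - \<Omega>) = 0"
    unfolding \<Omega>_def using null lssp by (simp add: Diff_Diff_Int Int_absorb1 null_setsD1)
  moreover have "\<exists>n::nat. n \<ge> 1 \<and>
              (\<exists>nk :: nat \<Rightarrow> nat. filterlim nk at_top sequentially \<and>
                 (\<forall>k. (T ^^ nk k) x \<in> K n \<and> (T ^^ nk k) y \<in> K n))"
    if x: "x \<in> \<Omega>" and y: "y \<in> \<Omega>" for x y
  proof -
    have ev: "\<exists>m. \<forall>n\<ge>m. z \<notin> A n" if "z \<in> \<Omega>" for z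
      using that unfolding \<Omega>_def limsup_INF_SUP by auto
    obtain mx where mx: "\<forall>n\<ge>mx. x \<notin> A n" using ev[OF x] by blast
    obtain my where my: "\<forall>n\<ge>my. y \<notin> A n" using ev[OF y] by blast
    define nn where "nn = Suc (max mx my)"
    have xs: "x \<in> space M" and ys: "y \<in> space M" using x y by (auto simp: \<Omega>_def)
    have cx: "(\<Sum>k<N. 3 * indicator (B nn) ((T^^k) x) - (1::real)) \<le> 0" for N
      using mx[rule_format, of "max mx my"] xs unfolding A_def E_def nn_def by (auto simp: not_less)
    have cy: "(\<Sum>k<N. 3 * indicator (B nn) ((T^^k) y) - (1::real)) \<le> 0" for N
      using my[rule_format, of "max mx my"] ys unfolding A_def E_def nn_def by (auto simp: not_less)
    define G where "G = {k. (T ^^ k) x \<in> K nn \<and> (T ^^ k) y \<in> K nn}"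
    have cnt: "real N \<le> 3 * real (card ({..<N} \<inter> G))" for N
    proof -
      have pw: "1 - indicator (B nn) ((T^^k) x) - indicator (B nn) ((T^^k) y) \<le> (indicator G k :: real)" for k
        using measurable_space[OF Tk xs, of k] measurable_space[OF Tk ys, of k]
        by (auto simp: B_def G_def indicator_def)
      have "(\<Sum>k<N. 1 - indicator (B nn) ((T^^k) x) - indicator (B nn) ((T^^k) y)) \<le> (\<Sum>k<N. (indicator G k :: real))"
        by (rule sum_mono) (rule pw)
      also have "\<dots> = real (card ({..<N} \<inter> G))" by (simp add: indicator_def)
      finally have "(\<Sum>k<N. 1 - indicator (B nn) ((T^^k) x) - indicator (B nn) ((T^^k) y)) \<le> real (card ({..<N} \<inter> G))" .
      moreover have "(\<Sum>k<N. 1 - indicator (B nn) ((T^^k) x) - indicator (B nn) ((T^^k) y)) =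
          real N - (\<Sum>k<N. indicator (B nn) ((T^^k) x)) - (\<Sum>k<N. (indicator (B nn) ((T^^k) y) :: real))"
        by (simp add: sum_subtractf)
      moreover have "3 * (\<Sum>k<N. (indicator (B nn) ((T^^k) x) :: real)) \<le> real N"
        using cx[of N] by (simp add: sum_subtractf sum_distrib_left)
      moreover have "3 * (\<Sum>k<N. (indicator (B nn) ((T^^k) y) :: real)) \<le> real N"
        using cy[of N] by (simp add: sum_subtractf sum_distrib_left)
      ultimately show ?thesis by linarith
    qed
    have inf: "infinite G"
    proof
      assume fin: "finite G"
      have "card ({..<3 * card G + 3} \<inter> G) \<le> card G" by (rule card_mono[OF fin]) auto
      with cnt[of "3 * card G + 3"] show False by simp
    qed
    have "strict_mono (enumerate G)" using enumerate_mono[OF _ inf] by (auto simp: strict_mono_def)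
    then have "filterlim (enumerate G) at_top sequentially" by (rule filterlim_subseq)
    moreover have "\<forall>k. (T ^^ enumerate G k) x \<in> K nn \<and> (T ^^ enumerate G k) y \<in> K nn"
      using enumerate_in_set[OF inf] by (auto simp: G_def)
    ultimately show ?thesis unfolding nn_def by auto
  qed
  ultimately show ?thesis by blast
qed

end
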